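(* Under the hypotheses of the variable-PAPR Rayleigh setting (channel $y=hx+v$, $v\sim\mathcal{CN}(0,1)$, perfect CSI at both ends, $|h|^2$ exponential with unit mean; $\mathcal{A}(\mathrm{SNR})\to\infty$, $\mathcal{A}(\mathrm{SNR})\mathrm{SNR}\to0$, peak constraint effective, and $l_0=\lim_{\mathrm{SNR}\to0}l(\mathrm{SNR})$ existing in $[0,\infty]$ with $l=\frac{1}{1/\lambda-\mathcal{A}(\mathrm{SNR})\mathrm{SNR}}-\lambda$), in both cases $l_0>0$ and $l_0=0$ one has $$\lim_{\mathrm{SNR}\to0}\frac{C(\mathrm{SNR})}{\mathrm{SNR}\log\mathcal{A}(\mathrm{SNR})}=1.$$ In particular, when $l_0>0$, $\log\mathcal{A}(\mathrm{SNR})\approx\log\frac1{\mathrm{SNR}}$.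
   Context: $\lambda$ is determined by $\mathrm{SNR}=\mathbf{E}[\min\{[1/\lambda-1/|h|^2]^+,\mathcal{A}(\mathrm{SNR})\,\mathrm{SNR}\}]$; the peak constraint is effective means $\mathcal{A}(\mathrm{SNR})\mathrm{SNR}<1/\lambda_0$ with $\mathrm{SNR}=\mathbf{E}[[1/\lambda_0-1/|h|^2]^+]$. $C(\mathrm{SNR})$ is the capacity under average power $\mathrm{SNR}$ and peak power $\mathcal{A}(\mathrm{SNR})\mathrm{SNR}$. $f\approx g$ means the ratio tends to 1 as $\mathrm{SNR}\to0$; logarithms are natural. *)

theory Defs
  imports "HOL-Analysis.Analysis"
begin

text \<open>Expectation with respect to the channel power gain g = |h|^2, which is
  exponentially distributed with unit mean (Rayleigh fading).\<close>
definition expE :: "(real \<Rightarrow> real) \<Rightarrow> real" where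
  "expE f = (LINT g:{0<..}|lborel. exp (- g) * f g)"

definition pos_part :: "real \<Rightarrow> real" where
  "pos_part x = max x 0"

text \<open>Capacity of the fading channel y = h x + v, v ~ CN(0,1), with perfect CSI at
  transmitter and receiver, under average power constraint P and peak power
  constraint Pk: the supremum over measurable power allocation policies
  p(g) in [0, Pk] with E[p(g)] <= P of E[log(1 + g p(g))].\<close>
definition capacity :: "real \<Rightarrow> real \<Rightarrow> real" where
  "capacity P Pk = (SUP p \<in> {p. p \<in> borel_measurable borel \<and> (\<forall>g. 0 \<le> p g \<and> p g \<le> Pk)
                                 \<and> expE p \<le> P}.
                      expE (\<lambda>g. ln (1 + g * p g)))"

end

theory Submission
  imports Defs "HOL-Real_Asymp.Real_Asymp"
begin

lemma exp_tail:
  fixes T :: real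
  shows "set_integrable lborel {T<..} (\<lambda>x. exp (-x))"
    "(LINT x:{T<..}|lborel. exp (-x)) = exp (-T)"
proof -
  have *: "set_integrable lborel (einterval (ereal T) \<infinity>) (\<lambda>x. exp (-x))"
    "(LBINT x=ereal T..\<infinity>. exp (-x)) = 0 - (- exp (-T))"
    by (rule interval_integral_FTC_nonneg[where F="\<lambda>x. - exp (-x)"];
        (auto intro!: derivative_eq_intros simp: ereal_tendsto_simps1)?;
        (real_asymp | (intro tendsto_intros continuous_intros)))+
  then show "set_integrable lborel {T<..} (\<lambda>x. exp (-x))" by simp
  show "(LINT x:{T<..}|lborel. exp (-x)) = exp (-T)"
    using *(2) by (simp add: interval_lebesgue_integral_def)
qed

lemma xexp_tail:
  fixes T :: real
  assumes "T \<ge> 0"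
  shows "set_integrable lborel {T<..} (\<lambda>x. x * exp (-x))"
    "(LINT x:{T<..}|lborel. x * exp (-x)) = (T + 1) * exp (-T)"
proof -
  have *: "set_integrable lborel (einterval (ereal T) \<infinity>) (\<lambda>x. x * exp (-x))"
    "(LBINT x=ereal T..\<infinity>. x * exp (-x)) = 0 - (- (T + 1) * exp (-T))"
    by (rule interval_integral_FTC_nonneg[where F="\<lambda>x. - (x + 1) * exp (-x)"];
        (use assms in \<open>auto intro!: derivative_eq_intros simp: ereal_tendsto_simps1 algebra_simps\<close>)?;
        (real_asymp | (intro tendsto_intros continuous_intros)))+
  then show "set_integrable lborel {T<..} (\<lambda>x. x * exp (-x))" by simp
  show "(LINT x:{T<..}|lborel. x * exp (-x)) = (T + 1) * exp (-T)"
    using *(2) by (simp add: interval_lebesgue_integral_def algebra_simps)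
qed

lemma ind_int:
  fixes T :: real
  assumes "T \<ge> 0"
  shows "set_integrable lborel {0<..} (\<lambda>g. exp (-g) * indicator {T<..} g)"
    "(LINT g:{0<..}|lborel. exp (-g) * indicator {T<..} g) = exp (-T)"
proof -
  have eq: "(\<lambda>g. indicator {0<..} g *\<^sub>R (exp (-g) * indicator {T<..} g)) =
     (\<lambda>g::real. indicator {T<..} g *\<^sub>R exp (-g))"
    using assms by (auto simp: indicator_def)
  show "set_integrable lborel {0<..} (\<lambda>g. exp (-g) * indicator {T<..} g)"
    using exp_tail(1)[of T] unfolding set_integrable_def eq .
  show "(LINT g:{0<..}|lborel. exp (-g) * indicator {T<..} g) = exp (-T)"
    using exp_tail(2)[of T] unfolding set_lebesgue_integral_def eq .
qed

lemma gind_int: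
  fixes T :: real
  assumes "T \<ge> 0"
  shows "set_integrable lborel {0<..} (\<lambda>g. exp (-g) * (g * indicator {T<..} g))"
    "(LINT g:{0<..}|lborel. exp (-g) * (g * indicator {T<..} g)) = (T + 1) * exp (-T)"
proof -
  have eq: "(\<lambda>g. indicator {0<..} g *\<^sub>R (exp (-g) * (g * indicator {T<..} g))) =
     (\<lambda>g::real. indicator {T<..} g *\<^sub>R (g * exp (-g)))"
    using assms by (auto simp: indicator_def)
  show "set_integrable lborel {0<..} (\<lambda>g. exp (-g) * (g * indicator {T<..} g))"
    using xexp_tail(1)[OF assms] unfolding set_integrable_def eq .
  show "(LINT g:{0<..}|lborel. exp (-g) * (g * indicator {T<..} g)) = (T + 1) * exp (-T)"
    using xexp_tail(2)[OF assms] unfolding set_lebesgue_integral_def eq .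
qed

lemma bdd_int:
  fixes p :: "real \<Rightarrow> real"
  assumes "p \<in> borel_measurable borel" "\<And>g. \<bar>p g\<bar> \<le> B"
  shows "set_integrable lborel {0<..} (\<lambda>g. exp (-g) * p g)"
proof (rule set_integrable_bound[where f="\<lambda>g. B * exp (-g)"])
  show "set_integrable lborel {0<..} (\<lambda>g. B * exp (-g))"
    using exp_tail(1)[of 0] by (intro set_integrable_mult_right) auto
  show "set_borel_measurable lborel {0<..} (\<lambda>g. exp (-g) * p g)"
    unfolding set_borel_measurable_def using assms(1) by measurable
  show "AE x in lborel. x \<in> {0<..} \<longrightarrow> norm (exp (-x) * p x) \<le> norm (B * exp (-x))"
  proof (intro AE_I2 impI)
    fix x :: real
    have "\<bar>p x\<bar> * exp (-x) \<le> \<bar>B\<bar> * exp (-x)"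
      using assms(2)[of x] by (intro mult_right_mono) auto
    then show "norm (exp (-x) * p x) \<le> norm (B * exp (-x))"
      by (simp add: abs_mult mult.commute)
  qed
qed

lemma rate_int:
  fixes p :: "real \<Rightarrow> real"
  assumes "p \<in> borel_measurable borel" "\<And>g. 0 \<le> p g \<and> p g \<le> P"
  shows "set_integrable lborel {0<..} (\<lambda>g. exp (-g) * ln (1 + g * p g))"
proof (rule set_integrable_bound[where f="\<lambda>g. P * (exp (-g) * (g * indicator {0<..} g))"])
  show "set_integrable lborel {0<..} (\<lambda>g. P * (exp (-g) * (g * indicator {0<..} g)))"
    using gind_int(1)[of 0] by (intro set_integrable_mult_right) auto
  show "set_borel_measurable lborel {0<..} (\<lambda>g. exp (-g) * ln (1 + g * p g))"
    unfolding set_borel_measurable_def using assms(1) by measurable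
  show "AE x in lborel. x \<in> {0<..} \<longrightarrow> norm (exp (-x) * ln (1 + x * p x))
          \<le> norm (P * (exp (-x) * (x * indicator {0<..} x)))"
  proof (intro AE_I2 impI)
    fix x :: real assume x: "x \<in> {0<..}"
    have p: "0 \<le> p x" "p x \<le> P" using assms(2)[of x] by auto
    have l0: "0 \<le> ln (1 + x * p x)" using x p by auto
    have "ln (1 + x * p x) \<le> x * p x" using x p by (intro ln_add_one_self_le_self) auto
    also have "\<dots> \<le> x * P" using x p by (intro mult_left_mono) auto
    finally have "exp (-x) * ln (1 + x * p x) \<le> exp (-x) * (x * P)"
      by (intro mult_left_mono) auto
    then show "norm (exp (-x) * ln (1 + x * p x)) \<le> norm (P * (exp (-x) * (x * indicator {0<..} x)))"
      using x l0 p by (simp add: abs_mult mult_ac)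
  qed
qed

lemma upper_p:
  fixes p :: "real \<Rightarrow> real"
  assumes pm: "p \<in> borel_measurable borel" and pb: "\<And>g. 0 \<le> p g \<and> p g \<le> P"
    and ps: "expE p \<le> s" and T: "T \<ge> 0"
  shows "expE (\<lambda>g. ln (1 + g * p g)) \<le> T * s + P * ((T + 1) * exp (-T))"
proof -
  have P: "P \<ge> 0" using pb[of 0] by auto
  have i1: "set_integrable lborel {0<..} (\<lambda>g. exp (-g) * p g)"
    by (rule bdd_int[OF pm, of P]) (use pb in \<open>auto simp: abs_le_iff\<close>)
  have i2: "set_integrable lborel {0<..} (\<lambda>g. exp (-g) * (g * indicator {T<..} g))"
    by (rule gind_int(1)[OF T])
  have i3: "set_integrable lborel {0<..} (\<lambda>g. exp (-g) * ln (1 + g * p g))"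
    by (rule rate_int[OF pm pb])
  have i4: "set_integrable lborel {0<..}
      (\<lambda>g. T * (exp (-g) * p g) + P * (exp (-g) * (g * indicator {T<..} g)))"
    using i1 i2 by (intro set_integral_add) auto
  have "expE (\<lambda>g. ln (1 + g * p g)) \<le>
      (LINT g:{0<..}|lborel. T * (exp (-g) * p g) + P * (exp (-g) * (g * indicator {T<..} g)))"
    unfolding expE_def
  proof (rule set_integral_mono[OF i3 i4])
    fix g :: real assume g: "g \<in> {0<..}"
    have p: "0 \<le> p g" "p g \<le> P" using pb[of g] by auto
    have "ln (1 + g * p g) \<le> g * p g" using g p by (intro ln_add_one_self_le_self) auto
    also have "\<dots> \<le> T * p g + P * (g * indicator {T<..} g)"
    proof (cases "g > T")
      case True
      have "g * p g \<le> g * P" using g p by (intro mult_left_mono) auto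
      moreover have "0 \<le> T * p g" using T p by simp
      ultimately show ?thesis using True by (simp add: mult_ac)
    next
      case False
      then have "g * p g \<le> T * p g" using p by (intro mult_right_mono) auto
      then show ?thesis using False by simp
    qed
    finally have "exp (-g) * ln (1 + g * p g) \<le> exp (-g) * (T * p g + P * (g * indicator {T<..} g))"
      by (intro mult_left_mono) auto
    then show "exp (-g) * ln (1 + g * p g) \<le> T * (exp (-g) * p g) + P * (exp (-g) * (g * indicator {T<..} g))"
      by (simp add: algebra_simps)
  qed
  also have "\<dots> = T * expE p + P * ((T + 1) * exp (-T))"
    using i1 i2 gind_int(2)[OF T] unfolding expE_def
    by (subst set_integral_add) auto
  also have "\<dots> \<le> T * s + P * ((T + 1) * exp (-T))"
    using ps T by (intro add_right_mono mult_left_mono) auto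
  finally show ?thesis .
qed

lemma cap_upper:
  assumes "P \<ge> 0" "T \<ge> 0" "s \<ge> 0"
  shows "capacity s P \<le> T * s + P * ((T + 1) * exp (-T))"
  unfolding capacity_def
proof (rule cSUP_least)
  show "{p. p \<in> borel_measurable borel \<and> (\<forall>g. 0 \<le> p g \<and> p g \<le> P) \<and> expE p \<le> s} \<noteq> {}"
  proof -
    have "(\<lambda>_. 0::real) \<in> {p. p \<in> borel_measurable borel \<and> (\<forall>g. 0 \<le> p g \<and> p g \<le> P) \<and> expE p \<le> s}"
      using assms by (auto simp: expE_def)
    then show ?thesis by blast
  qed
next
  fix p assume "p \<in> {p. p \<in> borel_measurable borel \<and> (\<forall>g. 0 \<le> p g \<and> p g \<le> P) \<and> expE p \<le> s}"
  then show "expE (\<lambda>g. ln (1 + g * p g)) \<le> T * s + P * ((T + 1) * exp (-T))"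
    using assms by (intro upper_p) auto
qed

lemma cap_lower:
  assumes Q: "Q > 0" "Q \<le> P" and T: "T \<ge> 0" and s: "Q * exp (-T) \<le> s"
  shows "ln (1 + T * Q) * exp (-T) \<le> capacity s P"
  unfolding capacity_def
proof (rule cSUP_upper2)
  let ?S = "{p. p \<in> borel_measurable borel \<and> (\<forall>g. 0 \<le> p g \<and> p g \<le> P) \<and> expE p \<le> s}"
  show "bdd_above ((\<lambda>p. expE (\<lambda>g. ln (1 + g * p g))) ` ?S)"
  proof (rule bdd_aboveI2[where M="1 * s + P * ((1 + 1) * exp (-1))"])
    fix p assume "p \<in> ?S"
    then show "expE (\<lambda>g. ln (1 + g * p g)) \<le> 1 * s + P * ((1 + 1) * exp (-1))"
      using upper_p[of p P s 1] by auto
  qed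
  define p0 where "p0 = (\<lambda>g::real. Q * indicator {T<..} g)"
  have pm: "p0 \<in> borel_measurable borel" unfolding p0_def by measurable
  have pb: "\<And>g. 0 \<le> p0 g \<and> p0 g \<le> Q" using Q by (auto simp: p0_def indicator_def)
  have "expE p0 = Q * exp (-T)"
    unfolding expE_def p0_def using ind_int(2)[OF T]
    by (simp add: mult.left_commute)
  then show "p0 \<in> ?S" using pm pb Q s by (auto intro: order_trans)
  have i3: "set_integrable lborel {0<..} (\<lambda>g. exp (-g) * ln (1 + g * p0 g))"
    by (rule rate_int[OF pm pb])
  have "ln (1 + T * Q) * exp (-T) = (LINT g:{0<..}|lborel. ln (1 + T * Q) * (exp (-g) * indicator {T<..} g))"
    using ind_int(2)[OF T] by simp
  also have "\<dots> \<le> expE (\<lambda>g. ln (1 + g * p0 g))"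
    unfolding expE_def
  proof (rule set_integral_mono[OF _ i3])
    show "set_integrable lborel {0<..} (\<lambda>g. ln (1 + T * Q) * (exp (-g) * indicator {T<..} g))"
      using ind_int(1)[OF T] by (intro set_integrable_mult_right) auto
    fix g :: real assume g: "g \<in> {0<..}"
    show "ln (1 + T * Q) * (exp (-g) * indicator {T<..} g) \<le> exp (-g) * ln (1 + g * p0 g)"
    proof (cases "g > T")
      case True
      have "ln (1 + T * Q) \<le> ln (1 + g * Q)"
        using True T Q by (subst ln_le_cancel_iff) (auto intro!: mult_right_mono add_pos_nonneg)
      then show ?thesis using True by (simp add: p0_def mult.commute)
    next
      case False
      then show ?thesis by (simp add: p0_def)
    qed
  qed
  finally show "ln (1 + T * Q) * exp (-T) \<le> expE (\<lambda>g. ln (1 + g * p0 g))" .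
qed

lemma ratio_bounds:
  fixes a s :: real
  assumes s: "s > 0" and a: "a \<ge> exp 1" and P1: "a * s < 1"
  shows "(ln a - ln (ln a)) / ln a - a * s \<le> capacity s (a * s) / (s * ln a)"
    "capacity s (a * s) / (s * ln a) \<le>
       (ln a + 2 * ln (ln a)) / ln a + (ln a + 2 * ln (ln a) + 1) / (ln a) ^ 3"
proof -
  have a0: "a > 0" using a by (meson exp_gt_zero less_le_trans)
  define L where "L = ln a"
  have L1: "L \<ge> 1" unfolding L_def using a a0 by (simp add: ln_ge_iff)
  have lnL: "ln L \<ge> 0" using L1 by simp
  have lnL2: "ln L \<le> L - 1" using L1 by (intro ln_le_minus_one) auto
  have P0: "a * s > 0" using a0 s by simp
  have sL: "s * L > 0" using s L1 by simp
  have eaL: "exp L = a" unfolding L_def using a0 by simp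
  define T where "T = L + 2 * ln L"
  have T0: "T \<ge> 0" unfolding T_def using L1 lnL by simp
  have e2: "exp (ln L * 2) = L * L"
  proof -
    have "exp (ln L * 2) = exp (ln L + ln L)" by (simp only: mult_2_right)
    also have "\<dots> = L * L" by (subst exp_add) (use L1 in simp)
    finally show ?thesis .
  qed
  have eT: "exp (-T) = 1 / (a * L^2)"
    unfolding T_def using L1 eaL e2
    by (simp add: exp_minus exp_add mult_2 power2_eq_square exp_diff field_simps)
  have "capacity s (a * s) \<le> T * s + a * s * ((T + 1) * exp (-T))"
    using cap_upper[of "a * s" T s] P0 T0 s by simp
  also have "\<dots> = s * (T + (T + 1) / L^2)"
    unfolding eT using a0 L1 by (simp add: field_simps)
  finally have "capacity s (a * s) / (s * L) \<le> s * (T + (T + 1) / L^2) / (s * L)"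
    using sL by (intro divide_right_mono) auto
  also have "\<dots> = T / L + (T + 1) / L ^ 3"
    using s L1 by (simp add: field_simps power2_eq_square power3_eq_cube)
  finally show "capacity s (a * s) / (s * ln a) \<le>
       (ln a + 2 * ln (ln a)) / ln a + (ln a + 2 * ln (ln a) + 1) / (ln a) ^ 3"
    unfolding T_def L_def .
  define Q where "Q = a * s / L"
  define T' where "T' = L - ln L"
  have Q0: "Q > 0" unfolding Q_def using P0 L1 by simp
  have QP: "Q \<le> a * s" unfolding Q_def using P0 L1
    by (simp add: divide_le_eq) (metis mult.right_neutral mult_left_mono less_imp_le)
  have T'0: "T' \<ge> 0" unfolding T'_def using lnL2 by simp
  have eT': "exp (-T') = L / a"
    unfolding T'_def using L1 eaL by (simp add: exp_diff exp_minus field_simps)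
  have Qs: "Q * exp (-T') = s" unfolding eT' Q_def using a0 L1 by (simp add: field_simps)
  have "ln (1 + T' * Q) * exp (-T') \<le> capacity s (a * s)"
    using cap_lower[OF Q0 QP T'0] Qs by simp
  then have "ln (1 + T' * Q) * exp (-T') / (s * L) \<le> capacity s (a * s) / (s * L)"
    using sL by (intro divide_right_mono) auto
  moreover have "ln (1 + T' * Q) * exp (-T') / (s * L) = ln (1 + T' * Q) / (a * s)"
    unfolding eT' using a0 L1 s by (simp add: field_simps)
  moreover have "T' / L - a * s \<le> ln (1 + T' * Q) / (a * s)"
  proof -
    define r where "r = T' / L"
    have r0: "0 \<le> r" "r \<le> 1" unfolding r_def T'_def using L1 lnL lnL2 by auto
    have x: "T' * Q = r * (a * s)" unfolding r_def Q_def by simp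
    have x0: "0 \<le> r * (a * s)" "r * (a * s) \<le> 1"
      using r0 P0 P1 by (auto intro: mult_le_one less_imp_le)
    have "r * (a * s) - (r * (a * s))^2 \<le> ln (1 + T' * Q)"
      unfolding x by (rule ln_one_plus_pos_lower_bound[OF x0])
    then have "(r * (a * s) - (r * (a * s))^2) / (a * s) \<le> ln (1 + T' * Q) / (a * s)"
      using P0 by (intro divide_right_mono) auto
    moreover have "(r * (a * s) - (r * (a * s))^2) / (a * s) = r - r^2 * (a * s)"
      using a0 s by (simp add: field_simps power2_eq_square)
    moreover have "r^2 * (a * s) \<le> a * s"
    proof -
      have "r^2 \<le> 1" using r0 by (simp add: power_le_one)
      then show ?thesis using mult_right_mono[of "r^2" 1 "a * s"] P0 by simp
    qed
    ultimately show ?thesis unfolding r_def by linarith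
  qed
  ultimately show "(ln a - ln (ln a)) / ln a - a * s \<le> capacity s (a * s) / (s * ln a)"
    unfolding T'_def L_def by linarith
qed

lemma lam_bound:
  fixes lam P s :: real
  assumes lam: "lam > 0" and P: "P \<ge> 0"
    and sdef: "s = expE (\<lambda>g. min (pos_part (1 / lam - 1 / g)) P)"
  shows "s \<le> exp (-lam) / lam"
proof -
  have mf: "(\<lambda>g. min (pos_part (1 / lam - 1 / g)) P) \<in> borel_measurable borel"
    unfolding pos_part_def by measurable
  have i1: "set_integrable lborel {0<..} (\<lambda>g. exp (-g) * min (pos_part (1 / lam - 1 / g)) P)"
    by (rule bdd_int[OF mf, of P]) (use P in \<open>auto simp: pos_part_def\<close>)
  have i2: "set_integrable lborel {0<..} (\<lambda>g. 1 / lam * (exp (-g) * indicator {lam<..} g))"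
    using ind_int(1)[of lam] lam by (intro set_integrable_mult_right) auto
  have "s \<le> (LINT g:{0<..}|lborel. 1 / lam * (exp (-g) * indicator {lam<..} g))"
    unfolding sdef expE_def
  proof (rule set_integral_mono[OF i1 i2])
    fix g :: real assume g: "g \<in> {0<..}"
    have "min (pos_part (1 / lam - 1 / g)) P \<le> 1 / lam * indicator {lam<..} g"
    proof (cases "g > lam")
      case True
      have "pos_part (1 / lam - 1 / g) \<le> 1 / lam" using g lam by (auto simp: pos_part_def)
      then have "min (pos_part (1 / lam - 1 / g)) P \<le> 1 / lam" by (simp add: min.coboundedI1)
      then show ?thesis using True by simp
    next
      case False
      then have "1 / lam \<le> 1 / g" using g lam by (simp add: frac_le)
      then show ?thesis using False P by (auto simp: pos_part_def min_def)
    qed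
    then have "exp (-g) * min (pos_part (1 / lam - 1 / g)) P \<le> exp (-g) * (1 / lam * indicator {lam<..} g)"
      by (rule mult_left_mono) simp
    then show "exp (-g) * min (pos_part (1 / lam - 1 / g)) P \<le> 1 / lam * (exp (-g) * indicator {lam<..} g)"
      by (metis mult.left_commute)
  qed
  also have "\<dots> = exp (-lam) / lam" using ind_int(2)[of lam] lam by simp
  finally show ?thesis .
qed

lemma part2_bounds:
  fixes lam P s c :: real
  assumes lam: "lam > 0" and P: "P \<ge> 0" "P \<le> 1" and s: "s > 0" "s < exp (-1)"
    and sdef: "s = expE (\<lambda>g. min (pos_part (1 / lam - 1 / g)) P)"
    and c: "c > 0" and lc: "1 / (1 / lam - P) - lam > c"
  shows "1 + (ln (c / (1 + c)) - 2 * ln (ln (1 / s))) / ln (1 / s) \<le> ln (P / s) / ln (1 / s)"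
    "ln (P / s) / ln (1 / s) \<le> 1"
proof -
  define M where "M = ln (1 / s)"
  have "exp 1 < 1 / s" using s by (simp add: exp_minus field_simps)
  then have M1: "M > 1" unfolding M_def using ln_less_cancel_iff[of "exp 1" "1/s"] s by simp
  have sl: "s \<le> exp (-lam) / lam" by (rule lam_bound[OF lam P(1) sdef])
  have lamM: "lam \<le> M"
  proof (cases "lam \<ge> 1")
    case True
    have "exp (-lam) / lam \<le> exp (-lam)" using True by (simp add: divide_le_eq)
    with sl have "s \<le> exp (-lam)" by simp
    then have "ln s \<le> -lam" using s by (metis ln_exp ln_le_cancel_iff exp_gt_zero)
    then show ?thesis unfolding M_def using s by (simp add: ln_div)
  next
    case False then show ?thesis using M1 by simp
  qed
  define d where "d = 1 / lam - P"
  have d0: "d > 0"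
  proof (rule ccontr)
    assume "\<not> d > 0"
    then have "1 / d \<le> 0" by simp
    then have "1 / (1 / lam - P) - lam < 0" using lam unfolding d_def by linarith
    then show False using lc c by linarith
  qed
  have "1 / d > lam + c" using lc unfolding d_def by simp
  then have "d < 1 / (lam + c)" using d0 lam c by (simp add: field_simps)
  then have "1 / lam - 1 / (lam + c) < P" unfolding d_def by simp
  moreover have "1 / lam - 1 / (lam + c) = c / (lam * (lam + c))" using lam c by (simp add: field_simps)
  ultimately have Pc: "c / (lam * (lam + c)) < P" by simp
  have "lam * (lam + c) \<le> M * (M + c)" using lamM lam c by (intro mult_mono) auto
  also have "\<dots> \<le> M * (M * (1 + c))" using M1 c by (intro mult_left_mono) (auto simp: algebra_simps)
  finally have "c / (M * (M * (1 + c))) \<le> c / (lam * (lam + c))"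
    using lam c M1 by (intro divide_left_mono) auto
  with Pc have Pc2: "c / (1 + c) / M^2 < P" by (simp add: power2_eq_square mult_ac)
  have P0: "P > 0" using Pc2 c M1 by (smt (verit) divide_pos_pos zero_less_power)
  have "ln (c / (1 + c) / M^2) \<le> ln P" using Pc2 c M1 P0 by (subst ln_le_cancel_iff) auto
  moreover have "ln (c / (1 + c) / M^2) = ln (c / (1 + c)) - 2 * ln M"
    using c M1 by (simp add: ln_div ln_mult ln_realpow)
  ultimately have lP: "ln (c / (1 + c)) - 2 * ln M \<le> ln P" by simp
  have lP2: "ln P \<le> 0" using P P0 by simp
  have la: "ln (P / s) = ln P + M" unfolding M_def using P0 s by (simp add: ln_div)
  have "ln (P / s) / M = 1 + ln P / M" unfolding la using M1 by (simp add: field_simps)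
  moreover have "(ln (c / (1 + c)) - 2 * ln M) / M \<le> ln P / M"
    using lP M1 by (intro divide_right_mono) auto
  moreover have "ln P / M \<le> 0" using lP2 M1 by (simp add: divide_nonpos_pos)
  ultimately show "1 + (ln (c / (1 + c)) - 2 * ln (ln (1 / s))) / ln (1 / s) \<le> ln (P / s) / ln (1 / s)"
    "ln (P / s) / ln (1 / s) \<le> 1" unfolding M_def by linarith+
qed

theorem mainTheorem8:
  fixes A lam lam0 :: "real \<Rightarrow> real" and l0 :: ereal
  assumes A_inf: "filterlim A at_top (at_right 0)"
    and A_peak: "((\<lambda>s. A s * s) \<longlongrightarrow> 0) (at_right 0)"
    and lam_def: "\<forall>\<^sub>F s in at_right 0. lam s > 0 \<and>
                    s = expE (\<lambda>g. min (pos_part (1 / lam s - 1 / g)) (A s * s))"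
    and lam0_eff: "\<forall>\<^sub>F s in at_right 0. lam0 s > 0 \<and>
                    s = expE (\<lambda>g. pos_part (1 / lam0 s - 1 / g)) \<and> A s * s < 1 / lam0 s"
    and l_lim: "((\<lambda>s. ereal (1 / (1 / lam s - A s * s) - lam s)) \<longlongrightarrow> l0) (at_right 0)"
    and l0_nonneg: "l0 \<ge> 0"
  shows "((\<lambda>s. capacity s (A s * s) / (s * ln (A s))) \<longlongrightarrow> 1) (at_right 0)
         \<and> (l0 > 0 \<longrightarrow> ((\<lambda>s. ln (A s) / ln (1 / s)) \<longlongrightarrow> 1) (at_right 0))"
proof
  have L_top: "filterlim (\<lambda>s. ln (A s)) at_top (at_right 0)"
    using filterlim_compose[OF ln_at_top A_inf] .
  have ev: "\<forall>\<^sub>F s in at_right 0. s > 0 \<and> A s \<ge> exp 1 \<and> A s * s < 1"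
    using eventually_at_right_less[of "0::real"]
      A_inf[unfolded filterlim_at_top, rule_format, of "exp 1"]
      order_tendstoD(2)[OF A_peak zero_less_one]
    by eventually_elim auto
  have low: "((\<lambda>s. (ln (A s) - ln (ln (A s))) / ln (A s) - A s * s) \<longlongrightarrow> 1) (at_right 0)"
  proof -
    have "((\<lambda>x::real. (x - ln x) / x) \<longlongrightarrow> 1) at_top" by real_asymp
    from filterlim_compose[OF this L_top]
    have "((\<lambda>s. (ln (A s) - ln (ln (A s))) / ln (A s)) \<longlongrightarrow> 1) (at_right 0)" .
    from tendsto_diff[OF this A_peak] show ?thesis by simp
  qed
  have up: "((\<lambda>s. (ln (A s) + 2 * ln (ln (A s))) / ln (A s)
                 + (ln (A s) + 2 * ln (ln (A s)) + 1) / (ln (A s)) ^ 3) \<longlongrightarrow> 1) (at_right 0)"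
  proof -
    have "((\<lambda>x::real. (x + 2 * ln x) / x + (x + 2 * ln x + 1) / x ^ 3) \<longlongrightarrow> 1) at_top"
      by real_asymp
    from filterlim_compose[OF this L_top] show ?thesis .
  qed
  show "((\<lambda>s. capacity s (A s * s) / (s * ln (A s))) \<longlongrightarrow> 1) (at_right 0)"
  proof (rule tendsto_sandwich[OF _ _ low up])
    show "\<forall>\<^sub>F s in at_right 0. (ln (A s) - ln (ln (A s))) / ln (A s) - A s * s
            \<le> capacity s (A s * s) / (s * ln (A s))"
      using ev by eventually_elim (auto intro: ratio_bounds(1))
    show "\<forall>\<^sub>F s in at_right 0. capacity s (A s * s) / (s * ln (A s)) \<le>
            (ln (A s) + 2 * ln (ln (A s))) / ln (A s) + (ln (A s) + 2 * ln (ln (A s)) + 1) / (ln (A s)) ^ 3"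
      using ev by eventually_elim (auto intro: ratio_bounds(2))
  qed
  show "l0 > 0 \<longrightarrow> ((\<lambda>s. ln (A s) / ln (1 / s)) \<longlongrightarrow> 1) (at_right 0)"
  proof
    assume l0: "l0 > 0"
    obtain c where c: "c > 0" "ereal c < l0"
    proof -
      obtain z where z: "0 < z" "z < l0" using dense[OF l0] by blast
      then obtain c where "z = ereal c" by (cases z) auto
      with z show ?thesis using that by auto
    qed
    have evl: "\<forall>\<^sub>F s in at_right 0. ereal c < ereal (1 / (1 / lam s - A s * s) - lam s)"
      by (rule order_tendstoD(1)[OF l_lim c(2)])
    have evs: "\<forall>\<^sub>F s in at_right (0::real). s < exp (-1)"
      by (rule order_tendstoD(2)[OF tendsto_ident_at]) simp
    define K where "K = ln (c / (1 + c))"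
    have lowf: "((\<lambda>s. 1 + (K - 2 * ln (ln (1 / s))) / ln (1 / s)) \<longlongrightarrow> 1) (at_right 0)"
      by real_asymp
    show "((\<lambda>s. ln (A s) / ln (1 / s)) \<longlongrightarrow> 1) (at_right 0)"
    proof (rule tendsto_sandwich[OF _ _ lowf tendsto_const])
      have "\<forall>\<^sub>F s in at_right 0. 1 + (K - 2 * ln (ln (1 / s))) / ln (1 / s) \<le> ln (A s) / ln (1 / s)
               \<and> ln (A s) / ln (1 / s) \<le> 1"
        using ev evl evs lam_def
      proof eventually_elim
        case (elim s)
        have As: "A s * s / s = A s" using elim by simp
        have "A s > 0" using elim by (meson exp_gt_zero less_le_trans)
        then have P0: "A s * s \<ge> 0" using elim by simp
        show ?case
          using part2_bounds[of "lam s" "A s * s" s c] elim P0 c(1) unfolding As K_def by auto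
      qed
      then show "\<forall>\<^sub>F s in at_right 0. 1 + (K - 2 * ln (ln (1 / s))) / ln (1 / s) \<le> ln (A s) / ln (1 / s)"
        "\<forall>\<^sub>F s in at_right 0. ln (A s) / ln (1 / s) \<le> 1"
        by (auto elim: eventually_mono)
    qed
  qed
qed

end
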